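(* Let $k,d,h$ be positive integers and let $C_h$ be a chain of size $h$. If $\mathcal{F}\subset[k]^d$ does not contain a strong copy of $C_h$, then $|\mathcal{F}|\le d(h-1)k^{d-1}$.
   Context: $[k]^d=\{1,\dots,k\}^d$ with the coordinatewise order $\preceq$. For a poset $Q$, a set $Q'\subset[k]^n$ is a strong copy of $Q$ if it is an induced copy of $Q$ (there is a bijection $\pi:Q\to Q'$ with $x\le_Q y\iff \pi(x)\preceq\pi(y)$) and moreover whenever $\mathbf x,\mathbf y\in Q'$ with $\mathbf x\prec\mathbf y$, we have $\mathbf x(i)<\mathbf y(i)$ for every coordinate $i\in[n]$ (incomparable pairs may share coordinates). *)

theory Defs
  imports "HOL-Library.FuncSet"
begin

definition grid :: "nat \<Rightarrow> nat \<Rightarrow> (nat \<Rightarrow> nat) set" where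
  "grid k d = PiE {..<d} (\<lambda>_. {1..k})"

definition cw_le :: "nat \<Rightarrow> (nat \<Rightarrow> nat) \<Rightarrow> (nat \<Rightarrow> nat) \<Rightarrow> bool" where
  "cw_le d x y = (\<forall>i<d. x i \<le> y i)"

definition strong_copy :: "nat \<Rightarrow> 'a set \<Rightarrow> ('a \<Rightarrow> 'a \<Rightarrow> bool) \<Rightarrow> (nat \<Rightarrow> nat) set \<Rightarrow> bool" where
  "strong_copy d Q leQ Q' =
     ((\<exists>\<pi>. bij_betw \<pi> Q Q' \<and> (\<forall>x\<in>Q. \<forall>y\<in>Q. leQ x y \<longleftrightarrow> cw_le d (\<pi> x) (\<pi> y))) \<and>
      (\<forall>x\<in>Q'. \<forall>y\<in>Q'. cw_le d x y \<and> x \<noteq> y \<longrightarrow> (\<forall>i<d. x i < y i)))"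

definition chain_poset :: "nat \<Rightarrow> nat set" where
  "chain_poset h = {..<h}"

end

theory Submission
  imports Defs "HOL-Library.Infinite_Set"
begin

definition gg :: "nat \<Rightarrow> (nat \<Rightarrow> nat) \<Rightarrow> nat \<Rightarrow> nat \<Rightarrow> nat" where
  "gg d b s = (\<lambda>i. if i < d then b i + s else undefined)"

definition tt :: "nat \<Rightarrow> (nat \<Rightarrow> nat) \<Rightarrow> nat" where
  "tt d x = Min (x ` {..<d})"

definition base :: "nat \<Rightarrow> (nat \<Rightarrow> nat) \<Rightarrow> nat \<Rightarrow> nat" where
  "base d x = (\<lambda>i. if i < d then x i + 1 - tt d x else undefined)"

lemma cw_gg: "d > 0 \<Longrightarrow> cw_le d (gg d b s) (gg d b s') \<longleftrightarrow> s \<le> s'"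
  unfolding cw_le_def gg_def by auto

lemma gg_inj: "d > 0 \<Longrightarrow> inj (gg d b)"
proof (rule injI)
  fix s s' assume "d > 0" "gg d b s = gg d b s'"
  then have "gg d b s 0 = gg d b s' 0" by simp
  with \<open>d>0\<close> show "s = s'" unfolding gg_def by simp
qed

lemma chain_bound:
  assumes d: "d > 0" and h: "h > 0" and fin: "finite F"
    and no: "\<not> (\<exists>Q'\<subseteq>F. strong_copy d (chain_poset h) (\<le>) Q')"
  shows "card {s. gg d b s \<in> F} \<le> h - 1"
proof (rule ccontr)
  let ?S = "{s. gg d b s \<in> F}"
  have finS: "finite ?S"
  proof -
    have "?S \<subseteq> gg d b -` F" by auto
    moreover have "finite (gg d b -` F)" using finite_vimageI[OF fin gg_inj[OF d]] .
    ultimately show ?thesis by (rule finite_subset)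
  qed
  assume "\<not> card ?S \<le> h - 1"
  then have "h \<le> card ?S" using h by linarith
  then obtain T where T: "T \<subseteq> ?S" "card T = h" using obtain_subset_with_card_n by metis
  have finT: "finite T" using finS T(1) finite_subset by blast
  obtain e where e: "bij_betw e {..<card T} T" "strict_mono_on {..<card T} e"
    using ex_bij_betw_strict_mono_card[OF finT] by blast
  define \<pi> where "\<pi> = gg d b \<circ> e"
  define Q where "Q = \<pi> ` {..<h}"
  have QF: "Q \<subseteq> F" unfolding Q_def \<pi>_def using e(1) T bij_betw_apply by fastforce
  have bij: "bij_betw \<pi> {..<h} Q"
  proof -
    have "inj_on e {..<h}" using e(1) T(2) bij_betw_imp_inj_on by blast
    then have "inj_on \<pi> {..<h}" unfolding \<pi>_def
      using gg_inj[OF d] by (metis comp_inj_on inj_on_subset subset_UNIV)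
    then show ?thesis unfolding Q_def by (simp add: inj_on_imp_bij_betw)
  qed
  have ord: "\<forall>x\<in>{..<h}. \<forall>y\<in>{..<h}. x \<le> y \<longleftrightarrow> cw_le d (\<pi> x) (\<pi> y)"
  proof (intro ballI)
    fix x y assume xy: "x \<in> {..<h}" "y \<in> {..<h}"
    have "x \<le> y \<longleftrightarrow> e x \<le> e y"
    proof
      assume "x \<le> y" then show "e x \<le> e y"
        using e(2) xy T(2) by (metis le_less strict_mono_onD)
    next
      assume "e x \<le> e y" then show "x \<le> y"
        using e(2) xy T(2) by (metis not_le strict_mono_onD)
    qed
    then show "x \<le> y \<longleftrightarrow> cw_le d (\<pi> x) (\<pi> y)" unfolding \<pi>_def using cw_gg[OF d] by simp
  qed
  have strong: "\<forall>x\<in>Q. \<forall>y\<in>Q. cw_le d x y \<and> x \<noteq> y \<longrightarrow> (\<forall>i<d. x i < y i)"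
  proof (intro ballI impI allI)
    fix x y i assume xy: "x \<in> Q" "y \<in> Q" "cw_le d x y \<and> x \<noteq> y" "i < d"
    then obtain s s' where ss: "x = gg d b s" "y = gg d b s'" unfolding Q_def \<pi>_def by auto
    then have "s < s'" using xy cw_gg[OF d] by (metis le_neq_implies_less)
    then show "x i < y i" using ss xy(4) unfolding gg_def by simp
  qed
  have "strong_copy d (chain_poset h) (\<le>) Q"
    unfolding strong_copy_def chain_poset_def using bij ord strong by blast
  with QF no show False by blast
qed

lemma tt_props:
  assumes d: "d > 0" and x: "x \<in> grid k d"
  shows "\<forall>i<d. tt d x \<le> x i" "\<exists>i<d. x i = tt d x" "tt d x \<ge> 1"
proof -
  have ne: "x ` {..<d} \<noteq> {}" using d by auto
  show "\<forall>i<d. tt d x \<le> x i" unfolding tt_def by simp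
  have "tt d x \<in> x ` {..<d}" unfolding tt_def using Min_in[OF _ ne] by simp
  then show "\<exists>i<d. x i = tt d x" by auto
  then obtain i where "i < d" "x i = tt d x" by blast
  moreover have "x i \<ge> 1" using x \<open>i<d\<close> unfolding grid_def by (auto simp: PiE_iff)
  ultimately show "tt d x \<ge> 1" by simp
qed

lemma x_eq_gg:
  assumes d: "d > 0" and x: "x \<in> grid k d"
  shows "x = gg d (base d x) (tt d x - 1)"
proof
  fix i
  show "x i = gg d (base d x) (tt d x - 1) i"
  proof (cases "i < d")
    case True
    then show ?thesis using tt_props[OF d x] unfolding gg_def base_def by auto
  next
    case False
    then show ?thesis using x unfolding gg_def grid_def by (auto simp: PiE_iff extensional_def)
  qed
qed

lemma base_in:
  assumes d: "d > 0" and x: "x \<in> grid k d"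
  shows "\<exists>j<d. base d x \<in> PiE {..<d} (\<lambda>i. if i = j then {1} else {1..k})"
proof -
  obtain j where j: "j < d" "x j = tt d x" using tt_props[OF d x] by blast
  have "base d x \<in> PiE {..<d} (\<lambda>i. if i = j then {1} else {1..k})"
  proof -
    have "\<forall>i<d. x i + 1 - tt d x \<le> k"
    proof (intro allI impI)
      fix i assume "i < d"
      then have "x i \<le> k" using x unfolding grid_def by (auto simp: PiE_iff)
      moreover have "tt d x \<ge> 1" using tt_props[OF d x] by blast
      ultimately show "x i + 1 - tt d x \<le> k" by linarith
    qed
    then show ?thesis
    using tt_props[OF d x] j x unfolding base_def grid_def
    by (auto simp: PiE_iff extensional_def)
  qed
  then show ?thesis using j by blast
qed

lemma card_Bj:
  assumes "j < d"
  shows "card (PiE {..<d} (\<lambda>i. if i = j then {1::nat} else {1..k})) = k ^ (d - 1)"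
proof -
  have "card (PiE {..<d} (\<lambda>i. if i = j then {1::nat} else {1..k}))
      = (\<Prod>i\<in>{..<d}. if i = j then 1 else k)"
    by (simp add: card_PiE if_distrib cong: if_cong)
  also have "\<dots> = (\<Prod>i\<in>{..<d} - {j}. k)"
    using assms by (subst prod.remove[of _ j]) auto
  also have "\<dots> = k ^ (d - 1)" using assms by simp
  finally show ?thesis .
qed

theorem lemma3p3:
  fixes k d h :: nat and F :: "(nat \<Rightarrow> nat) set"
  assumes "k > 0" and "d > 0" and "h > 0"
    and "F \<subseteq> grid k d"
    and "\<not> (\<exists>Q'\<subseteq>F. strong_copy d (chain_poset h) (\<le>) Q')"
  shows "card F \<le> d * (h - 1) * k ^ (d - 1)"
proof -
  have fing: "finite (grid k d)" unfolding grid_def by (simp add: finite_PiE)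
  have finF: "finite F" using assms(4) fing finite_subset by blast
  define B where "B = (\<lambda>j. PiE {..<d} (\<lambda>i. if i = j then {1::nat} else {1..k}))"
  have FU: "F = (\<Union>b\<in>base d ` F. {x\<in>F. base d x = b})" by auto
  have fib: "card {x\<in>F. base d x = b} \<le> h - 1" for b
  proof -
    have "{x\<in>F. base d x = b} \<subseteq> gg d b ` {s. gg d b s \<in> F}"
    proof
      fix x assume "x \<in> {x\<in>F. base d x = b}"
      then have x: "x \<in> F" "base d x = b" by auto
      then have "x = gg d b (tt d x - 1)" using x_eq_gg[OF assms(2)] assms(4) by blast
      with x show "x \<in> gg d b ` {s. gg d b s \<in> F}" by (metis (mono_tags, lifting) image_eqI mem_Collect_eq)
    qed
    moreover have finS: "finite {s. gg d b s \<in> F}"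
      using finite_vimageI[OF finF gg_inj[OF assms(2)]] by (simp add: vimage_def)
    ultimately have "card {x\<in>F. base d x = b} \<le> card (gg d b ` {s. gg d b s \<in> F})"
      by (intro card_mono) auto
    also have "\<dots> \<le> card {s. gg d b s \<in> F}" by (rule card_image_le[OF finS])
    also have "\<dots> \<le> h - 1" using chain_bound[OF assms(2) assms(3) finF assms(5)] .
    finally show ?thesis .
  qed
  have "card F \<le> (\<Sum>b\<in>base d ` F. card {x\<in>F. base d x = b})"
    by (subst FU) (rule card_UN_le, simp add: finF)
  also have "\<dots> \<le> card (base d ` F) * (h - 1)"
    using sum_bounded_above[of "base d ` F" "\<lambda>b. card {x\<in>F. base d x = b}" "h - 1"] fib by simp
  also have "card (base d ` F) \<le> d * k ^ (d - 1)"
  proof -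
    have "base d ` F \<subseteq> (\<Union>j<d. B j)" using base_in[OF assms(2)] assms(4) unfolding B_def by blast
    then have "card (base d ` F) \<le> card (\<Union>j<d. B j)"
      by (intro card_mono) (auto simp: B_def finite_PiE)
    also have "\<dots> \<le> (\<Sum>j<d. card (B j))" by (rule card_UN_le) simp
    also have "\<dots> = (\<Sum>j<d. k ^ (d - 1))" unfolding B_def using card_Bj by simp
    finally show ?thesis by simp
  qed
  then have "card (base d ` F) * (h - 1) \<le> d * k ^ (d - 1) * (h - 1)" by simp
  finally show ?thesis by (simp add: algebra_simps)
qed

end
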